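(* For every integer $n\geq 3$, $$\sum_{\substack{k+l+m=n\\ k,l,m\geq 1}}\frac{\bar B_{2k}\bar B_{2l}\bar B_{2m}}{(2k)(2l)(2m)}=\frac{3}{2n}\sum_{\substack{k+l+m=n\\ k,l,m\geq 1}}\frac{B_{2k}B_{2l}\bar B_{2m}}{(2k)(2l)}\binom{2n}{2k,2l,2m}+\frac3n H_{2n}\sum_{k=1}^{n-1}\binom{2n}{2k}\frac{B_{2k}\bar B_{2n-2k}}{2k}$$ $$+\frac{3}{2n^2}\sum_{k=1}^{n-1}\binom{2n}{2k}\frac{B_{2k}}{2k}\big(B_{2n-2k}-\bar B_{2n-2k}\big)+\frac{3}{2n^2}H_{2n-1}\big(B_{2n}-\bar B_{2n}\big)+6H_{2n,2}\frac{\bar B_{2n}}{2n}-\frac{2n-1}{4}\bar B_{2n-2}.$$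
   Context: $B_n$ denotes the Bernoulli numbers, defined by $\frac{x}{e^x-1}=\sum_{n\ge 0}B_n\frac{x^n}{n!}$. $\bar B_n:=\frac{1-2^{n-1}}{2^{n-1}}B_n$. $H_i=\sum_{j=1}^i\frac1j$ is the $i$-th harmonic number, and $H_{2n,2}:=\sum_{1\le i<j\le 2n}\frac{1}{ij}$. $\binom{2n}{2k,2l,2m}=\frac{(2n)!}{(2k)!(2l)!(2m)!}$ is the multinomial coefficient. *)

theory Defs
  imports "HOL-Analysis.Analysis" "HOL-Computational_Algebra.Formal_Power_Series"
begin

definition bernoulli :: "nat \<Rightarrow> real" where
  "bernoulli n = fact n * fps_nth (fps_X / (fps_exp 1 - 1)) n"

text \<open>bar B_n = (1 - 2^(n-1)) / 2^(n-1) * B_n (only used for n >= 1).\<close>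
definition bernoulli_bar :: "nat \<Rightarrow> real" where
  "bernoulli_bar n = (1 - 2 ^ (n - 1)) / 2 ^ (n - 1) * bernoulli n"

definition harm2 :: "nat \<Rightarrow> real" where
  "harm2 m = (\<Sum>(i, j) \<in> {(i, j). 1 \<le> i \<and> i < j \<and> j \<le> m}. 1 / (real i * real j))"

definition multinom3 :: "nat \<Rightarrow> nat \<Rightarrow> nat \<Rightarrow> nat \<Rightarrow> real" where
  "multinom3 N a b c = fact N / (fact a * fact b * fact c)"

definition triples :: "nat \<Rightarrow> (nat \<times> nat \<times> nat) set" where
  "triples n = {(k, l, m). 1 \<le> k \<and> 1 \<le> l \<and> 1 \<le> m \<and> k + l + m = n}"

end

theory Submission
  imports Defs "HOL-Computational_Algebra.Polynomial"
begin

unbundle no vec_syntax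
unbundle fps_syntax

definition KK :: "real fps" where "KK = Abs_fps (\<lambda>n. 1 / fact (Suc n))"
definition UU :: "real fps" where "UU = Abs_fps (\<lambda>n. (-1)^n / fact (Suc n))"
definition BF :: "real fps" where "BF = inverse KK"
definition Sinv :: "real fps" where "Sinv = fps_exp (1/2) * BF"
definition LL :: "real fps" where
  "LL = Abs_fps (\<lambda>n. if n = 0 then 0 else bernoulli n / (of_nat n * fact n))"
definition bb :: "nat \<Rightarrow> real" where "bb k = fact k * Sinv $ k"

lemma KK0[simp]: "KK $ 0 = 1" by (simp add: KK_def)
lemma UU0[simp]: "UU $ 0 = 1" by (simp add: UU_def)

lemma X_cancel: "fps_X * (a::real fps) = fps_X * b \<Longrightarrow> a = b"
  by simp

lemma XKK: "fps_X * KK = fps_exp 1 - 1"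
  by (auto simp: fps_eq_iff KK_def gr0_conv_Suc)

lemma XUU: "fps_X * UU = 1 - fps_exp (-1)"
  by (auto simp: fps_eq_iff UU_def gr0_conv_Suc)

lemma BF_KK: "BF * KK = 1"
  unfolding BF_def by (rule inverse_mult_eq_1) simp

lemma KK_BF: "KK * BF = 1"
  using BF_KK by (simp add: mult.commute)

lemma bernoulli_BF: "bernoulli n = fact n * BF $ n"
proof -
  have nz: "fps_X * KK \<noteq> 0"
    by (metis KK0 mult_eq_0_iff fps_X_neq_zero fps_nonzero_nth zero_neq_one)
  have "fps_X / (fps_exp 1 - 1) = (fps_X * KK) * BF / (fps_X * KK)"
    by (simp add: XKK[symmetric] mult.assoc KK_BF)
  also have "\<dots> = BF" using nz by simp
  finally show ?thesis by (simp add: bernoulli_def)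
qed

lemma fps_exp_mult_simp: "fps_exp a * fps_exp b = fps_exp (a + b :: real)"
  by (simp add: fps_exp_add_mult)

lemma UU_eq: "UU = fps_exp (-1) * KK"
proof (rule X_cancel)
  have "fps_X * (fps_exp (-1) * KK) = fps_exp (-1) * (fps_X * KK)" by (simp add: ac_simps)
  also have "\<dots> = 1 - fps_exp (-1)" by (simp add: XKK algebra_simps fps_exp_mult_simp)
  finally show "fps_X * UU = fps_X * (fps_exp (-1) * KK)" by (simp add: XUU)
qed

lemma Sinv_UU: "Sinv * UU = fps_exp (-1/2)"
proof -
  have "Sinv * UU = fps_exp (1/2) * fps_exp (-1) * (KK * BF)"
    by (simp add: Sinv_def UU_eq ac_simps)
  also have "\<dots> = fps_exp (-1/2)" by (simp add: KK_BF fps_exp_mult_simp)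
  finally show ?thesis .
qed

lemma Sinv_KK: "Sinv * KK = fps_exp (1/2)"
  by (simp add: Sinv_def mult.assoc BF_KK)

lemma aux_frac: "(F::real) > 0 \<Longrightarrow> x \<ge> 0 \<Longrightarrow> (x+1)*c/((x+2)*F) = c/F - c/((x+2)*F)"
proof -
  assume "F > 0" "x \<ge> 0"
  then have "x + 2 \<noteq> 0" "F \<noteq> 0" by auto
  then show ?thesis by (simp add: divide_simps) (simp add: algebra_simps)
qed

lemma X_deriv_UU: "fps_X * fps_deriv UU = fps_exp (-1) - UU"
proof -
  have "(fps_X * fps_deriv UU) $ n = (fps_exp (-1) - UU) $ n" for n
  proof (cases n)
    case 0 then show ?thesis by (simp add: UU_def)
  next
    case (Suc k)
    have f: "(fact (Suc (Suc k)) :: real) = (real k + 2) * fact (Suc k)"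
      by (simp add: algebra_simps)
    have fp: "(fact (Suc k) :: real) > 0" by simp
    have "(fps_X * fps_deriv UU) $ n = (real k + 1) * (-1)^(Suc k) / fact (Suc (Suc k))"
      using Suc apply (simp add: UU_def field_simps)
      by (simp add: minus_divide_left)
    also have "\<dots> = (-1)^(Suc k) / fact (Suc k) - (-1)^(Suc k) / fact (Suc (Suc k))"
      unfolding f using fp aux_frac[of "fact (Suc k)" "real k" "(-1)^Suc k"] by simp
    moreover have "(fps_exp (-1) - UU) $ n = (-1)^(Suc k) / fact (Suc k) - (-1)^(Suc k) / fact (Suc (Suc k))"
      using Suc by (simp add: UU_def power_minus' del: fact_Suc)
    ultimately show ?thesis by simp
  qed
  then show ?thesis by (simp add: fps_eq_iff)
qed

lemma BF0: "BF $ 0 = 1"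
  by (simp add: BF_def)

lemma X_deriv_LL: "fps_X * fps_deriv LL = BF - 1"
proof -
  have "(fps_X * fps_deriv LL) $ n = (BF - 1) $ n" for n
  proof (cases n)
    case 0 then show ?thesis by (simp add: BF0)
  next
    case (Suc k)
    then show ?thesis by (simp add: LL_def bernoulli_BF del: of_nat_Suc)
  qed
  then show ?thesis by (simp add: fps_eq_iff)
qed

lemma LL0[simp]: "LL $ 0 = 0" by (simp add: LL_def)

lemma deriv_UU: "fps_deriv UU = UU * fps_deriv LL"
proof (rule X_cancel)
  have "fps_X * (UU * fps_deriv LL) = UU * (BF - 1)"
    by (metis X_deriv_LL mult.left_commute)
  also have "\<dots> = fps_exp (-1) * (KK * BF) - UU"
    by (simp add: UU_eq algebra_simps)
  also have "\<dots> = fps_exp (-1) - UU" by (simp add: KK_BF)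
  finally show "fps_X * fps_deriv UU = fps_X * (UU * fps_deriv LL)"
    by (simp add: X_deriv_UU)
qed

lemma ode_unique:
  fixes A B G :: "real fps"
  assumes "fps_deriv A = G * A" "fps_deriv B = G * B" "A $ 0 = B $ 0"
  shows "A = B"
proof -
  have "A $ n = B $ n" for n
  proof (induction n rule: less_induct)
    case (less n)
    show ?case
    proof (cases n)
      case 0 then show ?thesis using assms by simp
    next
      case (Suc k)
      have "of_nat (Suc k) * A $ Suc k = (G * A) $ k"
        using arg_cong[OF assms(1), of "\<lambda>f. f $ k"] by simp
      also have "\<dots> = (G * B) $ k"
        unfolding fps_mult_nth using less Suc by (intro sum.cong) auto
      also have "\<dots> = of_nat (Suc k) * B $ Suc k"
        using arg_cong[OF assms(2), of "\<lambda>f. f $ k"] by simp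
      finally show ?thesis using Suc by (simp del: of_nat_Suc)
    qed
  qed
  then show ?thesis by (simp add: fps_eq_iff)
qed

lemma exp_LL: "fps_exp (of_nat m) oo LL = UU ^ m"
proof (rule ode_unique[where G = "fps_const (of_nat m) * fps_deriv LL"])
  show "fps_deriv (fps_exp (of_nat m) oo LL) =
     (fps_const (of_nat m) * fps_deriv LL) * (fps_exp (of_nat m) oo LL)"
    by (simp add: fps_compose_deriv fps_const_mult_apply_left[symmetric] ac_simps)
  show "fps_deriv (UU ^ m) = (fps_const (of_nat m) * fps_deriv LL) * UU ^ m"
  proof (cases m)
    case 0 then show ?thesis by simp
  next
    case (Suc k)
    have "fps_deriv (UU ^ Suc k) = fps_const (of_nat (Suc k)) * fps_deriv UU * UU ^ k"
      by (simp only: fps_deriv_power) simp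
    also have "\<dots> = fps_const (of_nat (Suc k)) * fps_deriv LL * (UU * UU ^ k)"
      by (simp add: deriv_UU ac_simps)
    finally show ?thesis using Suc by simp
  qed
  show "(fps_exp (of_nat m) oo LL) $ 0 = UU ^ m $ 0"
    by (simp add: fps_power_zeroth)
qed

definition Kh :: "real fps" where "Kh = Abs_fps (\<lambda>n. (1/2)^n / fact (Suc n))"
definition BH :: "real fps" where "BH = Abs_fps (\<lambda>n. (1/2)^n * BF $ n)"

lemma BH_Kh: "BH * Kh = 1"
proof -
  have "(BH * Kh) $ n = (1/2)^n * (BF * KK) $ n" for n
  proof -
    have "(BH * Kh) $ n = (\<Sum>i=0..n. (1/2)^n * (BF $ i * KK $ (n - i)))"
      unfolding fps_mult_nth
    proof (intro sum.cong refl)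
      fix i assume "i \<in> {0..n}"
      then have "(1/2::real)^n = (1/2)^i * (1/2)^(n-i)" by (simp add: power_add[symmetric])
      then show "BH $ i * Kh $ (n - i) = (1/2)^n * (BF $ i * KK $ (n - i))"
        by (simp add: BH_def Kh_def KK_def)
    qed
    then show ?thesis by (simp add: fps_mult_nth sum_distrib_left)
  qed
  then show ?thesis by (simp add: BF_KK fps_eq_iff)
qed

lemma XKh: "fps_X * Kh = fps_const 2 * (fps_exp (1/2) - 1)"
  by (auto simp: fps_eq_iff Kh_def gr0_conv_Suc power_Suc)

lemma E_half_sq: "fps_exp (1/2) * fps_exp (1/2) = fps_exp (1::real)"
  by (simp add: fps_exp_mult_simp)

lemma Kh_rel: "(fps_exp (1/2) + 1) * Kh = fps_const 2 * KK"
proof (rule X_cancel)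
  have "fps_X * ((fps_exp (1/2) + 1) * Kh) = (fps_exp (1/2) + 1) * (fps_X * Kh)" by (simp add: ac_simps)
  also have "\<dots> = fps_const 2 * (fps_exp (1/2) * fps_exp (1/2) - 1)"
    by (simp add: XKh algebra_simps)
  also have "\<dots> = fps_X * (fps_const 2 * KK)" by (simp add: E_half_sq XKK ac_simps)
  finally show "fps_X * ((fps_exp (1/2) + 1) * Kh) = fps_X * (fps_const 2 * KK)" .
qed

lemma BF_rel: "(fps_exp (1/2) + 1) * BF = fps_const 2 * BH"
proof -
  have h0: "(Kh * KK) $ 0 = 1" by (simp add: Kh_def)
  have nz: "Kh * KK \<noteq> 0"
  proof
    assume "Kh * KK = 0"
    then have "(Kh * KK) $ 0 = 0" by (simp only: fps_zero_nth)
    then show False using h0 by simp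
  qed
  have "((fps_exp (1/2) + 1) * BF) * (Kh * KK) = ((fps_exp (1/2) + 1) * Kh) * (BF * KK)"
    by (simp add: ac_simps)
  also have "\<dots> = fps_const 2 * KK" by (simp add: Kh_rel BF_KK)
  also have "\<dots> = (fps_const 2 * BH) * (Kh * KK)" by (simp add: BH_Kh flip: mult.assoc)
  finally show ?thesis using nz by simp
qed

lemma Sinv_alt: "Sinv = fps_const 2 * BH - BF"
  using BF_rel by (simp add: Sinv_def algebra_simps)

lemma Sinv_nth: "Sinv $ k = (2 * (1/2)^k - 1) * BF $ k"
  by (simp add: Sinv_alt BH_def algebra_simps)

lemma bb_bern: "bb k = (2 * (1/2)^k - 1) * bernoulli k"
  by (simp add: bb_def Sinv_nth bernoulli_BF)

lemma bb_bar: "k \<ge> 1 \<Longrightarrow> bb k = bernoulli_bar k"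
proof -
  assume k: "k \<ge> 1"
  have "(2::real) ^ (k - 1) * 2 = 2 ^ k" using k by (metis Suc_diff_le diff_Suc_1 power_Suc2)
  then have "(1 - 2 ^ (k - 1)) / 2 ^ (k - 1) = (2 * (1/2)^k - 1::real)"
    by (simp add: field_simps power_one_over)
  then show ?thesis by (simp add: bb_bern bernoulli_bar_def)
qed

lemma bb0: "bb 0 = 1"
  by (simp add: bb_bern bernoulli_BF BF0)

definition refl_fps :: "real fps \<Rightarrow> real fps" where
  "refl_fps f = Abs_fps (\<lambda>n. (-1)^n * f $ n)"

lemma refl_mult: "refl_fps (f * g) = refl_fps f * refl_fps g"
proof -
  have "(refl_fps (f * g)) $ n = (refl_fps f * refl_fps g) $ n" for n
  proof -
    have "(refl_fps f * refl_fps g) $ n = (\<Sum>i=0..n. (-1)^n * (f $ i * g $ (n - i)))"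
      unfolding fps_mult_nth
    proof (intro sum.cong refl)
      fix i assume "i \<in> {0..n}"
      then have "(-1::real)^n = (-1)^i * (-1)^(n-i)" by (simp add: power_add[symmetric])
      then show "refl_fps f $ i * refl_fps g $ (n - i) = (-1)^n * (f $ i * g $ (n - i))"
        by (simp add: refl_fps_def)
    qed
    then show ?thesis by (simp add: refl_fps_def fps_mult_nth sum_distrib_left)
  qed
  then show ?thesis by (simp add: fps_eq_iff)
qed

lemma refl_one: "refl_fps 1 = 1"
  by (auto simp: refl_fps_def fps_eq_iff)

lemma refl_exp: "refl_fps (fps_exp c) = fps_exp (-c)"
  by (auto simp: refl_fps_def fps_eq_iff power_minus')

lemma refl_KK: "refl_fps KK = UU"
  by (auto simp: refl_fps_def fps_eq_iff KK_def UU_def)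

lemma Sinv_UU_inv: "Sinv = fps_exp (-1/2) * inverse UU"
proof -
  have "Sinv = Sinv * (UU * inverse UU)" by (simp add: inverse_mult_eq_1')
  also have "\<dots> = fps_exp (-1/2) * inverse UU" by (simp add: Sinv_UU flip: mult.assoc)
  finally show ?thesis .
qed

lemma refl_Sinv: "refl_fps Sinv = Sinv"
proof -
  have "refl_fps BF * UU = 1"
    using refl_mult[of BF KK] by (simp add: BF_KK refl_one refl_KK)
  then have rb: "refl_fps BF = inverse UU"
    by (metis inverse_mult_eq_1' mult.assoc mult.commute mult_1 UU0 zero_neq_one)
  have "refl_fps Sinv = fps_exp (-1/2) * inverse UU"
    unfolding Sinv_def by (simp add: refl_mult refl_exp rb)
  then show ?thesis using Sinv_UU_inv by simp
qed

lemma Sinv_odd: "odd k \<Longrightarrow> Sinv $ k = 0"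
proof -
  assume k: "odd k"
  have "(-1)^k * Sinv $ k = Sinv $ k"
    using arg_cong[OF refl_Sinv, of "\<lambda>f. f $ k"] by (simp add: refl_fps_def)
  then show ?thesis using k by simp
qed

lemma bb_odd: "odd k \<Longrightarrow> bb k = 0"
  by (simp add: bb_def Sinv_odd)

lemma bern_odd: "odd k \<Longrightarrow> k \<ge> 3 \<Longrightarrow> bernoulli k = 0"
proof -
  assume k: "odd k" "k \<ge> 3"
  have "(1/2::real)^k \<le> (1/2)^2" using k by (intro power_decreasing) auto
  then have "2 * (1/2::real)^k - 1 \<noteq> 0" by (auto simp: power2_eq_square)
  then show ?thesis using bb_odd[OF k(1)] by (simp add: bb_bern)
qed

lemma BF1: "BF $ 1 = -1/2"
proof -
  have "(BF * KK) $ 1 = 0" by (simp add: BF_KK)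
  then show ?thesis by (simp add: BF0 KK_def)
qed

definition LamP :: "nat \<Rightarrow> real poly" where
  "LamP n = (if n = 0 then 0 else
     (\<Sum>a\<in>{1..n+1}. monom ((-1)^n * fact (n-1) * bb (n+1-a) / (fact a * fact (n+1-a))) a))"

lemma Sinv_nth_bb: "Sinv $ j = bb j / fact j"
  by (simp add: bb_def)

lemma poly_LamP:
  assumes n: "n \<ge> 1"
  shows "poly (LamP n) s = (-1)^n * fact (n-1) * (Sinv * (fps_exp s - 1)) $ (n+1)"
proof -
  have "(Sinv * (fps_exp s - 1)) $ (n+1) = ((fps_exp s - 1) * Sinv) $ (n+1)"
    by (simp add: mult.commute)
  also have "\<dots> = (\<Sum>a=0..n+1. (fps_exp s - 1) $ a * Sinv $ (n + 1 - a))"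
    by (simp only: fps_mult_nth)
  also have "\<dots> = (\<Sum>a\<in>{1..n+1}. (fps_exp s - 1) $ a * Sinv $ (n + 1 - a))"
    by (rule sum.mono_neutral_right) auto
  also have "\<dots> = (\<Sum>a\<in>{1..n+1}. s^a / fact a * (bb (n+1-a) / fact (n+1-a)))"
    by (intro sum.cong refl) (auto simp: Sinv_nth_bb)
  finally have e: "(Sinv * (fps_exp s - 1)) $ (n+1) = \<dots>" .
  have "poly (LamP n) s = (\<Sum>a\<in>{1..n+1}. (-1)^n * fact (n-1) * bb (n+1-a) / (fact a * fact (n+1-a)) * s^a)"
    using n unfolding LamP_def by (simp add: poly_sum poly_monom)
  also have "\<dots> = (-1)^n * fact (n-1) * (\<Sum>a\<in>{1..n+1}. s^a / fact a * (bb (n+1-a) / fact (n+1-a)))"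
    unfolding sum_distrib_left by (intro sum.cong refl) simp
  finally show ?thesis unfolding e .
qed

lemma LamP_diff:
  assumes n: "n \<ge> 1"
  shows "of_nat n * (poly (LamP n) (s+1) - poly (LamP n) s) = (-1)^n * (s + 1/2)^n"
proof -
  have "fps_exp (s+1) - fps_exp s = fps_exp s * (fps_exp 1 - 1)"
    by (simp add: fps_exp_add_mult algebra_simps)
  also have "\<dots> = fps_X * (fps_exp s * KK)" by (simp add: XKK[symmetric] ac_simps)
  finally have "Sinv * (fps_exp (s+1) - 1) - Sinv * (fps_exp s - 1) = fps_X * (fps_exp s * (Sinv * KK))"
    by (simp add: algebra_simps flip: right_diff_distrib)
  also have "\<dots> = fps_X * fps_exp (s + 1/2)"
    by (simp add: Sinv_KK fps_exp_mult_simp add.commute)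
  finally have eq: "Sinv * (fps_exp (s+1) - 1) - Sinv * (fps_exp s - 1) = fps_X * fps_exp (s + 1/2)" .
  have "(Sinv * (fps_exp (s+1) - 1)) $ (n+1) - (Sinv * (fps_exp s - 1)) $ (n+1)
     = (fps_X * fps_exp (s + 1/2)) $ (n+1)"
    unfolding eq[symmetric] by (simp only: fps_sub_nth)
  then have d: "(Sinv * (fps_exp (s+1) - 1)) $ (n+1) - (Sinv * (fps_exp s - 1)) $ (n+1) = (s+1/2)^n / fact n"
    by simp
  have "poly (LamP n) (s+1) - poly (LamP n) s
      = (-1)^n * fact (n-1) * ((Sinv * (fps_exp (s+1) - 1)) $ (n+1) - (Sinv * (fps_exp s - 1)) $ (n+1))"
    by (simp only: poly_LamP[OF n] right_diff_distrib)
  moreover have f: "of_nat n * fact (n-1) = (fact n :: real)"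
    using n by (cases n) (simp_all add: algebra_simps)
  ultimately have "of_nat n * (poly (LamP n) (s+1) - poly (LamP n) s)
      = (-1)^n * fact n * ((s+1/2)^n / fact n)"
    using d by (simp add: f[symmetric] ac_simps)
  then show ?thesis by simp
qed

definition vv :: "nat \<Rightarrow> nat \<Rightarrow> real" where "vv N j = (Sinv * LL ^ j) $ N"

definition cP :: "nat \<Rightarrow> real poly" where
  "cP N = pochhammer [:0,1:] N * (\<Sum>j\<le>N. monom (vv N j / fact j) j)"

lemma poly_poch: "poly (pochhammer [:0,1:] N) x = pochhammer x N"
  by (induction N) (simp_all add: pochhammer_Suc)

lemma Sinv0[simp]: "Sinv $ 0 = 1"
  by (simp add: Sinv_def BF0)

lemma compose_sum:
  "(Sinv * (fps_exp (real m) oo LL)) $ N = (\<Sum>j\<le>N. real m ^ j / fact j * vv N j)"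
proof -
  have inner: "(fps_exp (real m) oo LL) $ k = (\<Sum>j=0..N. real m ^ j / fact j * (LL ^ j) $ k)"
    if k: "k \<le> N" for k
  proof -
    have "(fps_exp (real m) oo LL) $ k = (\<Sum>j=0..k. real m ^ j / fact j * (LL ^ j) $ k)"
      by (simp add: fps_compose_nth)
    also have "\<dots> = (\<Sum>j=0..N. real m ^ j / fact j * (LL ^ j) $ k)"
      using k startsby_zero_power_prefix[OF LL0]
      by (intro sum.mono_neutral_left) auto
    finally show ?thesis .
  qed
  have "(Sinv * (fps_exp (real m) oo LL)) $ N
      = (\<Sum>i=0..N. Sinv $ i * (\<Sum>j=0..N. real m ^ j / fact j * (LL ^ j) $ (N - i)))"
    unfolding fps_mult_nth by (intro sum.cong refl) (simp add: inner)
  also have "\<dots> = (\<Sum>i=0..N. \<Sum>j=0..N. real m ^ j / fact j * (Sinv $ i * (LL ^ j) $ (N - i)))"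
    by (simp add: sum_distrib_left ac_simps)
  also have "\<dots> = (\<Sum>j=0..N. \<Sum>i=0..N. real m ^ j / fact j * (Sinv $ i * (LL ^ j) $ (N - i)))"
    by (rule sum.swap)
  also have "\<dots> = (\<Sum>j\<le>N. real m ^ j / fact j * vv N j)"
    by (simp add: vv_def fps_mult_nth sum_distrib_left atLeast0AtMost)
  finally show ?thesis .
qed

lemma poly_cP: "poly (cP N) (real m) = pochhammer (real m) N * (Sinv * UU ^ m) $ N"
proof -
  have "poly (cP N) (real m) = pochhammer (real m) N * (\<Sum>j\<le>N. real m ^ j / fact j * vv N j)"
    unfolding cP_def by (simp add: poly_poch poly_sum poly_monom ac_simps)
  also have "(\<Sum>j\<le>N. real m ^ j / fact j * vv N j) = (Sinv * UU ^ m) $ N"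
    using compose_sum[of m N] by (simp add: exp_LL)
  finally show ?thesis .
qed

definition gg :: "nat \<Rightarrow> nat \<Rightarrow> real" where
  "gg m N = pochhammer (real m) N * (Sinv * UU ^ m) $ N"

lemma gg_0N: "gg 0 N = (if N = 0 then 1 else 0)"
  by (simp add: gg_def pochhammer_0_left)

lemma gg_m0: "gg m 0 = 1"
  by (simp add: gg_def fps_power_zeroth)

lemma ring_aux:
  fixes x1 x2 x3 x4 x5 x6 :: "'a::comm_ring_1"
  assumes "x1 = x2 * x3 + x4 * x5 - x4 * x3 - x4 * x6"
  shows "x1 + x4 * x6 = x4 * x5 - (x4 - x2) * x3"
  using assms
  by (simp add: algebra_simps)

lemma fps_ident:
  "fps_X * fps_deriv (Sinv * UU ^ Suc m) + fps_const (real m) * (Sinv * UU ^ Suc m)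
   = fps_const (real m) * (Sinv * UU ^ m) - fps_const (real m + 1/2) * (fps_X * (Sinv * UU ^ Suc m))"
proof -
  have C1: "Sinv * UU ^ Suc m = fps_exp (-1/2) * UU ^ m"
    by (simp add: Sinv_UU flip: mult.assoc)
  have dE: "fps_deriv (fps_exp (-1/2::real)) = fps_const (-1/2) * fps_exp (-1/2)" by simp
  show ?thesis
  proof (cases m)
    case 0
    then show ?thesis unfolding C1 by (simp add: minus_mult_left)
  next
    case (Suc k)
    have Cm: "Sinv * UU ^ m = fps_exp (-1/2) * UU ^ k"
      using Suc by (simp add: Sinv_UU flip: mult.assoc)
    have dU: "fps_deriv (UU ^ m) = fps_const (real m) * fps_deriv UU * UU ^ k"
      using Suc by (simp only: fps_deriv_power) simp
    have XdU: "fps_X * fps_deriv UU = 1 - fps_X * UU - UU"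
      by (simp add: X_deriv_UU XUU)
    have fc: "fps_const (real m + 1/2) = fps_const (real m) - fps_const (-1/2)" by simp
    have UUm: "UU * UU ^ k = UU ^ m" using Suc by simp
    have "fps_X * fps_deriv (Sinv * UU ^ Suc m)
        = fps_const (-1/2) * (fps_X * (fps_exp (-1/2) * UU ^ m))
          + fps_const (real m) * fps_exp (-1/2) * (fps_X * fps_deriv UU) * UU ^ k"
      unfolding C1 fps_deriv_mult dE dU by (simp add: algebra_simps)
    also have "\<dots> = fps_const (-1/2) * (fps_X * (fps_exp (-1/2) * UU ^ m))
          + fps_const (real m) * (fps_exp (-1/2) * UU ^ k)
          - fps_const (real m) * (fps_X * (fps_exp (-1/2) * UU ^ m))
          - fps_const (real m) * (fps_exp (-1/2) * UU ^ m)"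
      unfolding XdU UUm[symmetric] by (simp add: algebra_simps)
    finally have ch: "fps_X * fps_deriv (Sinv * UU ^ Suc m) = \<dots>" .
    show ?thesis
      unfolding C1 Cm fc using ring_aux[OF ch[unfolded C1]] by (simp only: ac_simps)
  qed
qed

lemma gg_rec: "gg (Suc m) (Suc N) = gg m (Suc N) - (real m + 1/2) * gg (Suc m) N"
proof -
  define c' where "c' = Sinv * UU ^ Suc m"
  define c where "c = Sinv * UU ^ m"
  have "(fps_X * fps_deriv c' + fps_const (real m) * c') $ Suc N
       = (fps_const (real m) * c - fps_const (real m + 1/2) * (fps_X * c')) $ Suc N"
    using fps_ident[of m] unfolding c'_def c_def by simp
  then have e: "(real N + 1 + real m) * c' $ Suc N = real m * c $ Suc N - (real m + 1/2) * c' $ N"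
    by (simp add: algebra_simps)
  have p1: "pochhammer (real (Suc m)) (Suc N) = pochhammer (real (Suc m)) N * (real N + 1 + real m)"
    by (simp add: pochhammer_Suc algebra_simps)
  have p2: "pochhammer (real m) (Suc N) = real m * pochhammer (real (Suc m)) N"
    by (simp add: pochhammer_rec add.commute)
  have "gg (Suc m) (Suc N) = pochhammer (real (Suc m)) N * ((real N + 1 + real m) * c' $ Suc N)"
    unfolding gg_def c'_def p1 by simp
  also have "\<dots> = pochhammer (real (Suc m)) N * (real m * c $ Suc N - (real m + 1/2) * c' $ N)"
    by (simp only: e)
  also have "\<dots> = gg m (Suc N) - (real m + 1/2) * gg (Suc m) N"
    unfolding gg_def c'_def c_def p2 by (simp add: algebra_simps)
  finally show ?thesis .
qed

definition LamF :: "real \<Rightarrow> real fps" where "LamF s = Abs_fps (\<lambda>n. poly (LamP n) s)"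
definition GG :: "nat \<Rightarrow> real fps" where "GG m = Abs_fps (gg m)"

lemma LamF0: "LamF 0 = 0"
proof -
  have "poly (LamP n) 0 = 0" for n
  proof (cases "n = 0")
    case True then show ?thesis by (simp add: LamP_def)
  next
    case False then have "n \<ge> 1" by simp
    then show ?thesis by (simp add: poly_LamP)
  qed
  then show ?thesis by (simp add: LamF_def fps_eq_iff)
qed

lemma GG_Q: "GG (Suc m) * (1 + fps_const (real m + 1/2) * fps_X) = GG m"
proof -
  have "(GG (Suc m) * (1 + fps_const (real m + 1/2) * fps_X)) $ N = GG m $ N" for N
  proof (cases N)
    case 0 then show ?thesis by (simp add: GG_def gg_m0)
  next
    case (Suc N')
    have "(GG (Suc m) * (1 + fps_const (real m + 1/2) * fps_X)) $ N
       = gg (Suc m) (Suc N') + (real m + 1/2) * gg (Suc m) N'"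
      using Suc by (simp add: GG_def distrib_left mult.left_commute[of _ "fps_const _"])
    also have "\<dots> = gg m (Suc N')" by (simp add: gg_rec)
    finally show ?thesis using Suc by (simp add: GG_def)
  qed
  then show ?thesis by (simp add: fps_eq_iff)
qed

definition Dl :: "real \<Rightarrow> real fps" where "Dl a = Abs_fps (\<lambda>k. (-1)^(k+1) * a^(k+1))"

lemma Delta: "fps_deriv (LamF (real m + 1)) - fps_deriv (LamF (real m)) = Dl (real m + 1/2)"
proof -
  have "(fps_deriv (LamF (real m + 1)) - fps_deriv (LamF (real m))) $ k = Dl (real m + 1/2) $ k" for k
  proof -
    have "(fps_deriv (LamF (real m + 1)) - fps_deriv (LamF (real m))) $ k
        = of_nat (k+1) * (poly (LamP (k+1)) (real m + 1) - poly (LamP (k+1)) (real m))"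
      by (simp add: LamF_def algebra_simps)
    also have "\<dots> = (-1)^(k+1) * (real m + 1/2)^(k+1)"
      by (rule LamP_diff) simp
    finally show ?thesis by (simp add: Dl_def)
  qed
  then show ?thesis by (simp add: fps_eq_iff)
qed

lemma Dl_Q: "Dl a * (1 + fps_const a * fps_X) = - fps_const a"
proof -
  have "(Dl a * (1 + fps_const a * fps_X)) $ N = (- fps_const a) $ N" for N
  proof (cases N)
    case 0 then show ?thesis by (simp add: Dl_def)
  next
    case (Suc N')
    then show ?thesis
      by (simp add: Dl_def distrib_left mult.left_commute[of _ "fps_const _"] power_Suc)
  qed
  then show ?thesis by (simp add: fps_eq_iff)
qed

lemma GG0: "GG 0 = 1"
  by (auto simp: GG_def gg_0N fps_eq_iff)

lemma GG_ode: "fps_deriv (GG m) = fps_deriv (LamF (real m)) * GG m"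
proof (induction m)
  case 0 then show ?case by (simp add: GG0 LamF0)
next
  case (Suc m)
  define a where "a = real m + 1/2"
  define Q where "Q = 1 + fps_const a * fps_X"
  have Q0: "Q \<noteq> 0"
  proof
    assume "Q = 0" then have "Q $ 0 = 0" by simp
    then show False by (simp add: Q_def)
  qed
  have GQ: "GG (Suc m) * Q = GG m" unfolding Q_def a_def by (rule GG_Q)
  have dQ: "fps_deriv Q = fps_const a" by (simp add: Q_def)
  have e1: "fps_deriv (GG m) = fps_deriv (GG (Suc m)) * Q + GG (Suc m) * fps_const a"
    unfolding GQ[symmetric] by (simp add: dQ)
  have LD: "fps_deriv (LamF (real (Suc m))) = fps_deriv (LamF (real m)) + Dl a"
    using Delta[of m] unfolding a_def by (simp add: algebra_simps)
  have "fps_deriv (GG (Suc m)) * Q = fps_deriv (GG m) - GG (Suc m) * fps_const a"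
    using e1 by simp
  also have "\<dots> = fps_deriv (LamF (real m)) * GG (Suc m) * Q - GG (Suc m) * fps_const a"
    using Suc.IH GQ by (simp add: ac_simps)
  also have "\<dots> = fps_deriv (LamF (real (Suc m))) * GG (Suc m) * Q"
  proof -
    have DQ: "Dl a * Q = - fps_const a" using Dl_Q[of a] unfolding Q_def .
    have "fps_deriv (LamF (real (Suc m))) * GG (Suc m) * Q
        = fps_deriv (LamF (real m)) * GG (Suc m) * Q + (Dl a * Q) * GG (Suc m)"
      unfolding LD by (simp add: algebra_simps)
    also have "\<dots> = fps_deriv (LamF (real m)) * GG (Suc m) * Q - GG (Suc m) * fps_const a"
    proof -
      have "(Dl a * Q) * GG (Suc m) = - (GG (Suc m) * fps_const a)"
        unfolding DQ by (simp only: mult_minus_left mult.commute)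
      then show ?thesis by simp
    qed
    finally show ?thesis by (simp flip: distrib_right)
  qed
  finally show ?case using Q0 by simp
qed

lemma GG_poly: "GG m = Abs_fps (\<lambda>N. poly (cP N) (real m))"
  unfolding GG_def by (rule arg_cong[where f=Abs_fps]) (simp add: fun_eq_iff gg_def poly_cP)

definition RP :: "nat \<Rightarrow> real poly" where
  "RP N = smult (of_nat (N+1)) (cP (N+1)) - (\<Sum>i=0..N. smult (of_nat (i+1)) (LamP (i+1)) * cP (N-i))"

lemma RP_eval: "poly (RP N) (real m) = 0"
proof -
  have "(fps_deriv (GG m)) $ N = (fps_deriv (LamF (real m)) * GG m) $ N"
    by (simp only: GG_ode)
  then have "of_nat (N+1) * poly (cP (N+1)) (real m)
      = (\<Sum>i=0..N. of_nat (i+1) * poly (LamP (i+1)) (real m) * poly (cP (N-i)) (real m))"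
    by (simp add: GG_poly LamF_def fps_mult_nth)
  then show ?thesis by (simp add: RP_def poly_sum mult.assoc)
qed

lemma poly_nat_zero:
  fixes p :: "real poly"
  assumes "\<And>m::nat. poly p (real m) = 0"
  shows "p = 0"
proof (rule ccontr)
  assume "p \<noteq> 0"
  then have "finite {x. poly p x = 0}" by (rule poly_roots_finite)
  moreover have "range real \<subseteq> {x. poly p x = 0}" using assms by auto
  moreover have "infinite (range (real :: nat \<Rightarrow> real))"
    by (rule range_inj_infinite) (simp add: inj_on_def)
  ultimately show False using finite_subset by blast
qed

lemma cP_rec: "smult (of_nat (N+1)) (cP (N+1)) = (\<Sum>i=0..N. smult (of_nat (i+1)) (LamP (i+1)) * cP (N-i))"
proof -
  have "RP N = 0" by (rule poly_nat_zero) (rule RP_eval)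
  then show ?thesis by (simp add: RP_def)
qed

definition DD :: "nat \<Rightarrow> real fps" where "DD j = Abs_fps (\<lambda>N. coeff (cP N) j)"
definition LA :: "nat \<Rightarrow> real fps" where "LA a = Abs_fps (\<lambda>n. coeff (LamP n) a)"

lemma coeff_LamP0: "coeff (LamP n) 0 = 0"
  by (simp add: LamP_def coeff_sum)

lemma LA0: "LA 0 = 0"
  by (simp add: LA_def coeff_LamP0 fps_eq_iff)

lemma cP0: "cP 0 = 1"
  by (simp add: cP_def vv_def monom_0 one_pCons)

lemma DD_0th: "DD j $ 0 = (if j = 0 then 1 else 0)"
  by (simp add: DD_def cP0)

lemma LA_0th: "LA a $ 0 = 0"
  by (simp add: LA_def LamP_def)

lemma DD_ode: "fps_deriv (DD j) = (\<Sum>a=0..j. fps_deriv (LA a) * DD (j - a))"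
proof -
  have "fps_deriv (DD j) $ N = (\<Sum>a=0..j. fps_deriv (LA a) * DD (j - a)) $ N" for N
  proof -
    have "fps_deriv (DD j) $ N = coeff (smult (of_nat (N+1)) (cP (N+1))) j"
      by (simp add: DD_def)
    also have "\<dots> = (\<Sum>i=0..N. of_nat (i+1) * coeff (LamP (i+1) * cP (N-i)) j)"
      unfolding cP_rec by (simp add: coeff_sum mult_smult_left)
    also have "\<dots> = (\<Sum>i=0..N. \<Sum>a=0..j. of_nat (i+1) * coeff (LamP (i+1)) a * coeff (cP (N-i)) (j-a))"
      by (simp add: coeff_mult sum_distrib_left atLeast0AtMost mult.assoc)
    also have "\<dots> = (\<Sum>a=0..j. \<Sum>i=0..N. of_nat (i+1) * coeff (LamP (i+1)) a * coeff (cP (N-i)) (j-a))"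
      by (rule sum.swap)
    also have "\<dots> = (\<Sum>a=0..j. fps_deriv (LA a) * DD (j - a)) $ N"
      by (simp add: fps_sum_nth fps_mult_nth LA_def DD_def)
    finally show ?thesis .
  qed
  then show ?thesis by (simp add: fps_eq_iff)
qed

lemma DD0: "DD 0 = 1"
proof -
  have "fps_deriv (DD 0) = 0" using DD_ode[of 0] by (simp add: LA0)
  then have "DD 0 = fps_const (DD 0 $ 0)" by (simp add: fps_deriv_eq_0_iff)
  then show ?thesis by (simp add: DD_0th)
qed

lemma DD1: "DD 1 = LA 1"
proof -
  have "fps_deriv (DD 1) = fps_deriv (LA 1)"
    using DD_ode[of 1] by (simp add: LA0 DD0)
  then show ?thesis by (simp add: fps_deriv_eq_iff DD_0th LA_0th)
qed

lemma DD1': "DD (Suc 0) = LA (Suc 0)"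
  using DD1 by simp

lemma DD2: "DD 2 = fps_const (1/2) * LA 1 ^ 2 + LA 2"
proof -
  have s2: "{0..2::nat} = {0,1,2}" by auto
  have "fps_deriv (DD 2) = fps_deriv (LA 1) * LA 1 + fps_deriv (LA 2)"
    using DD_ode[of 2] by (simp add: s2 LA0 DD0 DD1')
  also have "\<dots> = fps_deriv (fps_const (1/2) * LA 1 ^ 2 + LA 2)"
    by (simp add: fps_deriv_power power2_eq_square)
  finally have "DD 2 = fps_const (DD 2 $ 0 - (fps_const (1/2) * LA 1 ^ 2 + LA 2) $ 0) + (fps_const (1/2) * LA 1 ^ 2 + LA 2)"
    by (simp only: fps_deriv_eq_iff)
  moreover have "DD 2 $ 0 - (fps_const (1/2) * LA 1 ^ 2 + LA 2) $ 0 = 0"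
    by (simp add: DD_0th LA_0th fps_power_zeroth)
  ultimately show ?thesis by simp
qed

lemma deriv_cube: "fps_deriv (fps_const (1/6) * (f::real fps) ^ 3) = fps_const (1/2) * (fps_deriv f * f ^ 2)"
proof -
  have "fps_deriv (fps_const (1/6) * f ^ 3) = fps_const (1/6) * (fps_const (of_nat 3) * fps_deriv f * f ^ 2)"
    by (simp only: fps_deriv_mult_const_left fps_deriv_power) simp
  also have "\<dots> = (fps_const (1/6) * fps_const 3) * (fps_deriv f * f ^ 2)"
    by (simp only: mult.assoc of_nat_numeral)
  also have "fps_const (1/6) * fps_const 3 = (fps_const (1/2) :: real fps)"
    by simp
  finally show ?thesis .
qed

lemma DD3: "DD 3 = fps_const (1/6) * LA 1 ^ 3 + LA 1 * LA 2 + LA 3"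
proof -
  have s3: "{0..3::nat} = {0,1,2,3}" by auto
  have "fps_deriv (DD 3) = fps_deriv (LA 1) * DD 2 + fps_deriv (LA 2) * DD 1 + fps_deriv (LA 3)"
    using DD_ode[of 3] by (simp add: s3 LA0 DD0 add.assoc)
  also have "\<dots> = fps_deriv (fps_const (1/6) * LA 1 ^ 3 + LA 1 * LA 2 + LA 3)"
    unfolding fps_deriv_add deriv_cube unfolding fps_deriv_mult DD1 DD2
    by (simp add: algebra_simps power2_eq_square)
  finally have "DD 3 = fps_const (DD 3 $ 0 - (fps_const (1/6) * LA 1 ^ 3 + LA 1 * LA 2 + LA 3) $ 0) + (fps_const (1/6) * LA 1 ^ 3 + LA 1 * LA 2 + LA 3)"
    by (simp only: fps_deriv_eq_iff)
  moreover have "DD 3 $ 0 - (fps_const (1/6) * LA 1 ^ 3 + LA 1 * LA 2 + LA 3) $ 0 = 0"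
    by (simp add: DD_0th LA_0th fps_power_zeroth)
  ultimately show ?thesis by simp
qed

lemma harm2_Suc: "harm2 (Suc m) = harm2 m + harm m / real (Suc m)"
proof -
  let ?A = "{(i, j). 1 \<le> i \<and> i < j \<and> j \<le> m}"
  let ?B = "(\<lambda>i. (i, Suc m)) ` {1..m}"
  have fA: "finite ?A"
    by (rule finite_subset[of _ "{1..m} \<times> {1..m}"]) auto
  have eq: "{(i, j). 1 \<le> i \<and> i < j \<and> j \<le> Suc m} = ?A \<union> ?B"
    by (auto simp: le_Suc_eq)
  have disj: "?A \<inter> ?B = {}" by auto
  have "harm2 (Suc m) = (\<Sum>(i, j)\<in>?A. 1 / (real i * real j)) + (\<Sum>(i, j)\<in>?B. 1 / (real i * real j))"
    unfolding harm2_def eq by (rule sum.union_disjoint) (use fA disj in auto)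
  also have "(\<Sum>(i, j)\<in>?B. 1 / (real i * real j)) = (\<Sum>i=1..m. 1 / (real i * real (Suc m)))"
    by (subst sum.reindex) (auto simp: inj_on_def)
  also have "\<dots> = harm m / real (Suc m)"
    by (simp add: harm_def sum_distrib_right divide_inverse)
  finally show ?thesis by (simp add: harm2_def)
qed

lemma harm2_0: "harm2 0 = 0"
proof -
  have e: "{(i, j). 1 \<le> i \<and> i < j \<and> j \<le> (0::nat)} = {}" by auto
  show ?thesis unfolding harm2_def e by simp
qed

lemma poch_rec_coeff:
  "coeff (pochhammer [:0,1::real:] (Suc M)) k
     = (if k = 0 then 0 else coeff (pochhammer [:0,1::real:] M) (k-1)) + of_nat M * coeff (pochhammer [:0,1::real:] M) k"
  by (cases k) (simp_all add: pochhammer_Suc algebra_simps coeff_pCons of_nat_poly)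

lemma poch_coeffs_Suc:
  "coeff (pochhammer [:0,1::real:] (Suc K)) 0 = 0
   \<and> coeff (pochhammer [:0,1::real:] (Suc K)) 1 = fact K
   \<and> coeff (pochhammer [:0,1::real:] (Suc K)) 2 = fact K * harm K
   \<and> coeff (pochhammer [:0,1::real:] (Suc K)) 3 = fact K * harm2 K"
proof (induction K)
  case 0
  then show ?case by (simp add: pochhammer_Suc harm_def harm2_0 numeral_2_eq_2 numeral_3_eq_3 coeff_pCons)
next
  case (Suc K)
  let ?P = "pochhammer [:0,1::real:] (Suc K)"
  have c0: "coeff ?P 0 = 0" by (rule conjunct1[OF Suc.IH])
  have c1: "coeff ?P 1 = fact K" by (rule conjunct1[OF conjunct2[OF Suc.IH]])
  have c2: "coeff ?P 2 = fact K * harm K" by (rule conjunct1[OF conjunct2[OF conjunct2[OF Suc.IH]]])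
  have c3: "coeff ?P 3 = fact K * harm2 K" by (rule conjunct2[OF conjunct2[OF conjunct2[OF Suc.IH]]])
  have fM: "(fact (Suc K) :: real) = (real K + 1) * fact K" by simp
  have hM: "harm (Suc K) = harm K + 1 / (real K + 1)" by (simp add: harm_Suc divide_inverse add_ac)
  have h2M: "harm2 (Suc K) = harm2 K + harm K / (real K + 1)" by (simp add: harm2_Suc add_ac)
  have pos: "real K + 1 > 0" by simp
  have r0: "coeff (pochhammer [:0,1::real:] (Suc (Suc K))) 0 = 0"
    using poch_rec_coeff[of "Suc K" 0] c0 by simp
  have r1: "coeff (pochhammer [:0,1::real:] (Suc (Suc K))) 1 = fact (Suc K)"
    using poch_rec_coeff[of "Suc K" 1] c0 c1 fM by simp
  have r2: "coeff (pochhammer [:0,1::real:] (Suc (Suc K))) 2 = fact (Suc K) * harm (Suc K)"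
  proof -
    have "coeff (pochhammer [:0,1::real:] (Suc (Suc K))) 2 = fact K + (real K + 1) * (fact K * harm K)"
      using poch_rec_coeff[of "Suc K" 2] c1 c2 by simp
    also have "\<dots> = fact (Suc K) * harm (Suc K)"
      unfolding fM hM using pos by (simp add: field_simps)
    finally show ?thesis .
  qed
  have r3: "coeff (pochhammer [:0,1::real:] (Suc (Suc K))) 3 = fact (Suc K) * harm2 (Suc K)"
  proof -
    have "coeff (pochhammer [:0,1::real:] (Suc (Suc K))) 3 = fact K * harm K + (real K + 1) * (fact K * harm2 K)"
      using poch_rec_coeff[of "Suc K" 3] c2 c3 by simp
    also have "\<dots> = fact (Suc K) * harm2 (Suc K)"
      unfolding fM h2M using pos by (simp add: field_simps)
    finally show ?thesis .
  qed
  show ?case using r0 r1 r2 r3 by blast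
qed

lemma coeff_LamP:
  "coeff (LamP n) a = (if n \<ge> 1 \<and> 1 \<le> a \<and> a \<le> n+1
      then (-1)^n * fact (n-1) * bb (n+1-a) / (fact a * fact (n+1-a)) else 0)"
  by (auto simp: LamP_def coeff_sum)

lemma coeff_q:
  "coeff (\<Sum>j\<le>N. monom (vv N j / fact j) j) k = (if k \<le> N then vv N k / fact k else 0)"
  by (simp add: coeff_sum)

lemma coeff_cP3:
  assumes "N \<ge> 3"
  shows "coeff (cP N) 3 = fact (N-1) * vv N 2 / 2 + fact (N-1) * harm (N-1) * vv N 1
                          + fact (N-1) * harm2 (N-1) * vv N 0"
proof -
  obtain K where K: "N = Suc K" using assms by (cases N) auto
  have s3: "{..3::nat} = {0,1,2,3}" by auto
  note pc = poch_coeffs_Suc[of K]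
  have p0: "coeff (pochhammer [:0,1::real:] (Suc K)) 0 = 0" by (rule conjunct1[OF pc])
  have p1: "coeff (pochhammer [:0,1::real:] (Suc K)) (Suc 0) = fact K" using conjunct1[OF conjunct2[OF pc]] by simp
  have p2: "coeff (pochhammer [:0,1::real:] (Suc K)) 2 = fact K * harm K" by (rule conjunct1[OF conjunct2[OF conjunct2[OF pc]]])
  have p3: "coeff (pochhammer [:0,1::real:] (Suc K)) 3 = fact K * harm2 K" by (rule conjunct2[OF conjunct2[OF conjunct2[OF pc]]])
  show ?thesis
    unfolding cP_def coeff_mult s3 coeff_q unfolding K using assms K
    by (simp add: p0 p1 p2 p3)
qed

definition evn :: "real fps \<Rightarrow> real fps" where "evn f = Abs_fps (\<lambda>k. f $ (2*k))"
definition oddz :: "real fps \<Rightarrow> bool" where "oddz f = (\<forall>k. odd k \<longrightarrow> f $ k = 0)"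

lemma X2pow_nth: "(((fps_X::real fps)^2)^i) $ m = (if m = 2*i then 1 else 0)"
  by (simp add: power_mult[symmetric] mult.commute)

lemma compose_X2_nth: "((A::real fps) oo fps_X^2) $ m = (if even m then A $ (m div 2) else 0)"
proof -
  have "(A oo fps_X^2) $ m = (\<Sum>i=0..m. A $ i * ((fps_X^2)^i) $ m)"
    by (simp only: fps_compose_nth)
  also have "\<dots> = (\<Sum>i=0..m. if i = m div 2 then (if even m then A $ i else 0) else 0)"
  proof (intro sum.cong refl)
    fix i assume "i \<in> {0..m}"
    show "A $ i * ((fps_X^2)^i) $ m = (if i = m div 2 then (if even m then A $ i else 0) else 0)"
      by (auto simp: X2pow_nth)
  qed
  also have "\<dots> = (if even m then A $ (m div 2) else 0)"
    by (simp add: sum.delta)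
  finally show ?thesis .
qed

lemma X2_0: "((fps_X::real fps)^2) $ 0 = 0" by simp

lemma evn_comp: "oddz f \<Longrightarrow> f = evn f oo fps_X^2"
  unfolding fps_eq_iff compose_X2_nth oddz_def evn_def by auto

lemma evn_of_comp: "evn (A oo fps_X^2) = A"
  unfolding fps_eq_iff compose_X2_nth evn_def by simp

lemma oddz_comp: "oddz (A oo fps_X^2)"
  unfolding oddz_def compose_X2_nth by simp

lemma mult_evn: "oddz f \<Longrightarrow> oddz g \<Longrightarrow> f * g = (evn f * evn g) oo fps_X^2"
  by (metis evn_comp fps_compose_mult_distrib X2_0)

lemma oddz_mult: "oddz f \<Longrightarrow> oddz g \<Longrightarrow> oddz (f * g)"
  by (metis mult_evn oddz_comp)

lemma evn_mult: "oddz f \<Longrightarrow> oddz g \<Longrightarrow> evn (f * g) = evn f * evn g"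
  by (metis mult_evn evn_of_comp)

lemma evn_nth: "evn f $ k = f $ (2*k)" by (simp add: evn_def)

lemma oddz_nth_even: "oddz f \<Longrightarrow> (f * g) $ (2*n) = (evn f * evn g) $ n" if "oddz g"
  using mult_evn[OF _ that] by (metis evn_nth evn_of_comp)

definition T3 :: "nat \<Rightarrow> (nat \<times> nat \<times> nat) set" where
  "T3 n = {(i, j, k). i + j + k = n}"

lemma finite_T3: "finite (T3 n)"
  by (rule finite_subset[of _ "{0..n} \<times> {0..n} \<times> {0..n}"]) (auto simp: T3_def)

lemma triple_nth: "((A::real fps) * B * C) $ n = (\<Sum>(i, j, k)\<in>T3 n. A $ i * B $ j * C $ k)"
proof -
  have "(A * B * C) $ n = (\<Sum>s=0..n. \<Sum>i=0..s. A $ i * B $ (s - i) * C $ (n - s))"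
    unfolding fps_mult_nth[of "A*B"] fps_mult_nth[of A B]
    by (intro sum.cong refl) (simp add: sum_distrib_right)
  also have "\<dots> = (\<Sum>(s, i)\<in>Sigma {0..n} (\<lambda>s. {0..s}). A $ i * B $ (s - i) * C $ (n - s))"
    by (rule sum.Sigma) auto
  also have "\<dots> = (\<Sum>(i, j, k)\<in>T3 n. A $ i * B $ j * C $ k)"
    by (rule sum.reindex_bij_witness[where i = "\<lambda>(i, j, k). (i + j, i)" and j = "\<lambda>(s, i). (i, s - i, n - s)"])
       (auto simp: T3_def)
  finally show ?thesis .
qed

lemma fact_pred: "k \<ge> 1 \<Longrightarrow> (fact k :: real) = real k * fact (k - 1)"
  by (cases k) auto

lemma LA1_nth: "LA 1 $ k = (if k = 0 then 0 else (-1)^k * bb k / real k)"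
proof (cases "k = 0")
  case True then show ?thesis by (simp add: LA_def coeff_LamP)
next
  case False
  then have "fact k = real k * fact (k-1)" by (intro fact_pred) simp
  then show ?thesis using False by (simp add: LA_def coeff_LamP)
qed

lemma LA1_nth': "LA (Suc 0) $ k = (if k = 0 then 0 else (-1)^k * bb k / real k)"
  using LA1_nth by simp

lemma LA2_nth: "LA 2 $ k = (if k = 0 then 0 else (-1)^k * bb (k-1) / 2)"
  by (auto simp: LA_def coeff_LamP)

lemma LA3_nth: "n \<ge> 1 \<Longrightarrow> LA 3 $ (2*n) = real (2*n-1) * bb (2*n-2) / 6"
proof -
  assume n: "n \<ge> 1"
  then obtain j where j: "n = Suc j" by (cases n) auto
  have e1: "2*n = Suc (Suc (2*j))" "2*n-1 = Suc (2*j)" "2*n-2 = 2*j" using j by auto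
  have f: "(fact (Suc (2*j)) :: real) = real (Suc (2*j)) * fact (2*j)" by simp
  have "LA 3 $ (2*n) = fact (Suc (2*j)) * bb (2*j) / (6 * fact (2*j))"
    unfolding e1 by (simp add: LA_def coeff_LamP numeral_3_eq_3)
  also have "\<dots> = real (Suc (2*j)) * bb (2*j) / 6" unfolding f by simp
  finally have "LA 3 $ (2*n) = real (Suc (2*j)) * bb (2*j) / 6" unfolding e1 .
  then show ?thesis using e1 by simp
qed

lemma oddz_LA1: "oddz (LA 1)"
  by (simp add: oddz_def LA1_nth LA1_nth' bb_odd)

lemma LA12: "(LA 1 * LA 2) $ (2*n) = 0"
proof -
  have "LA 1 $ i * LA 2 $ (2*n - i) = 0" if "i \<le> 2*n" for i
  proof (cases "odd i")
    case True then show ?thesis by (simp add: LA1_nth LA1_nth' bb_odd)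
  next
    case False
    then have "2*n - i = 0 \<or> odd (2*n - i - 1)" using that by presburger
    then show ?thesis by (auto simp: LA2_nth bb_odd)
  qed
  then have "(\<Sum>i=0..2*n. LA 1 $ i * LA 2 $ (2*n - i)) = 0" by (intro sum.neutral) auto
  then show ?thesis by (simp only: fps_mult_nth)
qed

lemma evn_LA1: "evn (LA 1) $ k = bb (2*k) / real (2*k)"
  by (simp add: evn_nth LA1_nth LA1_nth')

definition ell :: "real fps" where "ell = LL + fps_const (1/2) * fps_X"

lemma bern1: "bernoulli 1 = -1/2"
  using BF1 by (simp add: bernoulli_BF)

lemma bern1': "bernoulli (Suc 0) = -1/2"
  using bern1 by simp

lemma ell_nth: "ell $ k = (if odd k then 0 else bernoulli k / (real k * fact k))"
proof (cases "odd k")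
  case True
  show ?thesis
  proof (cases "k = 1")
    case True then show ?thesis by (simp add: ell_def LL_def bern1 bern1')
  next
    case False
    with \<open>odd k\<close> have "k \<ge> 3" by presburger
    then show ?thesis using \<open>odd k\<close> False by (simp add: ell_def LL_def bern_odd)
  qed
next
  case False then show ?thesis by (auto simp: ell_def LL_def)
qed

lemma oddz_ell: "oddz ell" by (simp add: oddz_def ell_nth)
lemma oddz_Sinv: "oddz Sinv" by (simp add: oddz_def Sinv_odd)

definition lp :: "nat \<Rightarrow> real" where "lp k = bernoulli (2*k) / (real (2*k) * fact (2*k))"
definition sp :: "nat \<Rightarrow> real" where "sp k = bb (2*k) / fact (2*k)"

lemma evn_ell: "evn ell $ k = lp k" by (simp add: evn_nth ell_nth lp_def)
lemma evn_Sinv: "evn Sinv $ k = sp k" by (simp add: evn_nth sp_def bb_def)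
lemma lp0: "lp 0 = 0" by (simp add: lp_def)
lemma sp0: "sp 0 = 1" by (simp add: sp_def bb0)

lemma LL_ell: "LL = ell - fps_const (1/2) * fps_X" by (simp add: ell_def)

lemma vv1: "n \<ge> 1 \<Longrightarrow> vv (2*n) 1 = (Sinv * ell) $ (2*n)"
proof -
  assume n: "n \<ge> 1"
  have "Sinv * LL = Sinv * ell - fps_const (1/2) * (fps_X * Sinv)"
    by (simp add: LL_ell algebra_simps)
  moreover have "(fps_X * Sinv) $ (2*n) = 0" using n by (simp add: Sinv_odd)
  ultimately show ?thesis by (simp add: vv_def)
qed

lemma vv2: "n \<ge> 1 \<Longrightarrow> vv (2*n) 2 = (Sinv * ell^2) $ (2*n) + bb (2*n-2) / (4 * fact (2*n-2))"
proof -
  assume n: "n \<ge> 1"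
  have two: "2 * fps_const (1/2) = (1::real fps)" by (simp add: numeral_fps_const)
  have "LL^2 = ell^2 - 2 * fps_const (1/2) * fps_X * ell + (fps_const (1/2) * fps_X)^2"
    unfolding LL_ell by (simp add: power2_diff algebra_simps)
  also have "\<dots> = ell^2 - fps_X * ell + fps_const (1/4) * fps_X^2"
    unfolding two by (simp add: power_mult_distrib power2_eq_square ac_simps)
  finally have LL2: "LL^2 = ell^2 - fps_X * ell + fps_const (1/4) * fps_X^2" .
  have "Sinv * LL^2 = Sinv * ell^2 - fps_X * (Sinv * ell) + fps_const (1/4) * (fps_X^2 * Sinv)"
    unfolding LL2 by (simp add: algebra_simps)
  moreover have "(fps_X * (Sinv * ell)) $ (2*n) = 0"
  proof -
    have "oddz (Sinv * ell)" by (rule oddz_mult[OF oddz_Sinv oddz_ell])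
    then show ?thesis using n by (simp add: oddz_def)
  qed
  moreover have "(fps_X^2 * Sinv) $ (2*n) = Sinv $ (2*n-2)"
    using n by (simp add: fps_X_power_mult_nth)
  ultimately show ?thesis by (simp add: vv_def Sinv_nth_bb)
qed

lemma triples_sub: "triples n \<subseteq> T3 n"
  by (auto simp: triples_def T3_def)

lemma finite_triples: "finite (triples n)"
  using finite_subset[OF triples_sub finite_T3] .

lemma T3_cube:
  fixes G :: "nat \<times> nat \<times> nat \<Rightarrow> real"
  assumes "\<And>j k. G (0, j, k) = 0" "\<And>i k. G (i, 0, k) = 0" "\<And>i j. G (i, j, 0) = 0"
  shows "(\<Sum>x\<in>T3 n. G x) = (\<Sum>x\<in>triples n. G x)"
proof (rule sum.mono_neutral_right[OF finite_T3 triples_sub])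
  show "\<forall>x\<in>T3 n - triples n. G x = 0"
  proof
    fix x assume "x \<in> T3 n - triples n"
    then obtain i j k where x: "x = (i, j, k)" "i = 0 \<or> j = 0 \<or> k = 0"
      by (cases x) (auto simp: triples_def T3_def)
    then show "G x = 0" using assms by auto
  qed
qed

lemma T3_split:
  fixes G :: "nat \<times> nat \<times> nat \<Rightarrow> real"
  assumes G0: "\<And>j k. G (0, j, k) = 0" "\<And>i k. G (i, 0, k) = 0"
  shows "(\<Sum>x\<in>T3 n. G x) = (\<Sum>x\<in>triples n. G x) + (\<Sum>i=1..n-1. G (i, n-i, 0))"
proof -
  let ?I = "(\<lambda>i. (i, n-i, 0::nat)) ` {1..n-1}"
  have sub: "triples n \<union> ?I \<subseteq> T3 n" by (auto simp: triples_def T3_def)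
  have "(\<Sum>x\<in>T3 n. G x) = (\<Sum>x\<in>triples n \<union> ?I. G x)"
  proof (rule sum.mono_neutral_right[OF finite_T3 sub])
    show "\<forall>x\<in>T3 n - (triples n \<union> ?I). G x = 0"
    proof
      fix x assume xin: "x \<in> T3 n - (triples n \<union> ?I)"
      obtain i j k where x: "x = (i, j, k)" by (cases x)
      show "G x = 0"
      proof (cases "i = 0 \<or> j = 0")
        case True then show ?thesis using G0 x by auto
      next
        case False
        then have "k \<noteq> 0" using xin x by (auto simp: triples_def T3_def)
        then have "x \<in> triples n" using xin x False by (auto simp: triples_def T3_def)
        then show ?thesis using xin by auto
      qed
    qed
  qed
  also have "\<dots> = (\<Sum>x\<in>triples n. G x) + (\<Sum>x\<in>?I. G x)"
    by (intro sum.union_disjoint finite_triples) (auto simp: triples_def)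
  also have "(\<Sum>x\<in>?I. G x) = (\<Sum>i=1..n-1. G (i, n-i, 0))"
    by (subst sum.reindex) (auto simp: inj_on_def)
  finally show ?thesis .
qed

lemma sum_flip: "(\<Sum>k=1..n-1. f k) = (\<Sum>k=1..n-1. f (n - k :: nat) :: real)"
  by (rule sum.reindex_bij_witness[where i = "\<lambda>k. n - k" and j = "\<lambda>k. n - k"]) auto

lemma Wd_sym:
  "(\<Sum>k=1..n-1. lp k * (real (2*(n-k)) * lp (n-k))) = real n * (\<Sum>k=1..n-1. lp k * lp (n-k))"
proof -
  let ?g = "\<lambda>k. lp k * lp (n-k)"
  have A: "(\<Sum>k=1..n-1. lp k * (real (2*(n-k)) * lp (n-k))) = (\<Sum>k=1..n-1. ?g k * real (2*(n-k)))"
    by (simp add: ac_simps)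
  have "(\<Sum>k=1..n-1. ?g k * real (2*(n-k))) = (\<Sum>k=1..n-1. ?g (n-k) * real (2*(n-(n-k))))"
    by (rule sum_flip)
  also have "\<dots> = (\<Sum>k=1..n-1. ?g k * real (2*k))"
    by (intro sum.cong refl) (auto simp: mult.commute)
  finally have B: "(\<Sum>k=1..n-1. ?g k * real (2*(n-k))) = (\<Sum>k=1..n-1. ?g k * real (2*k))" .
  have "2 * (\<Sum>k=1..n-1. ?g k * real (2*(n-k)))
       = (\<Sum>k=1..n-1. ?g k * (real (2*(n-k)) + real (2*k)))"
    using B by (simp add: sum.distrib distrib_left)
  also have "\<dots> = (\<Sum>k=1..n-1. ?g k * (2 * real n))"
    by (intro sum.cong refl) auto
  also have "\<dots> = (\<Sum>k=1..n-1. ?g k) * (2 * real n)"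
    by (rule sum_distrib_right[symmetric])
  finally have C: "2 * (\<Sum>k=1..n-1. ?g k * real (2*(n-k))) = (\<Sum>k=1..n-1. ?g k) * (2 * real n)" .
  show ?thesis unfolding A using C by (simp add: algebra_simps)
qed

lemma final_alg:
  fixes n X3 Y Z Wd bbN bbM BN H H2 F F2 Hn H2n LHS :: real
  assumes n: "n \<ge> 3" and Fpos: "F > 0"
    and F2: "F2 = 2*n*F"
    and Hn: "Hn = H + 1/(2*n)" and H2n: "H2n = H2 + H/(2*n)" and Wd: "Wd = n * Z"
    and L: "LHS = 6 * (F * (X3 + Z + (2*n-1)*bbM/(4*F)) / 2 + F * H * (Y + BN/(2*n*F2)) + F * H2 * (bbN/F2)) - (2*n-1)*bbM"
  shows "LHS = 3/(2*n) * (F2 * X3) + 3/n * Hn * (F2 * Y) + 3/(2*n^2) * (F2 * (Wd - Y))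
     + 3/(2*n^2) * H * (BN - bbN) + 6 * H2n * bbN / (2*n) - (2*n-1)/4 * bbM"
proof -
  have "n \<noteq> 0" "F \<noteq> 0" using n Fpos by auto
  then show ?thesis unfolding L F2 Hn H2n Wd by (simp add: field_simps power2_eq_square)
qed

lemma sum_split_ends:
  fixes n :: nat
  assumes "n \<ge> 1"
  shows "(\<Sum>i=0..n. f i) = f 0 + (\<Sum>i=1..n-1. f i) + (f n :: real)"
proof -
  obtain j where j: "n = Suc j" using assms by (cases n) auto
  have "(\<Sum>i=0..Suc j. f i) = (\<Sum>i=0..j. f i) + f (Suc j)" by (rule sum.atLeast0_atMost_Suc)
  also have "(\<Sum>i=0..j. f i) = f 0 + (\<Sum>i=Suc 0..j. f i)" by (rule sum.atLeast_Suc_atMost) simp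
  finally show ?thesis using j by simp
qed

lemma cube_part:
  assumes n: "n \<ge> 1"
  shows "(LA 1 ^ 3) $ (2*n) = (\<Sum>(k, l, m) \<in> triples n.
            bernoulli_bar (2*k) * bernoulli_bar (2*l) * bernoulli_bar (2*m)
            / (real (2*k) * real (2*l) * real (2*m)))"
proof -
  define E where "E = evn (LA 1)"
  have Ek: "E $ k = bb (2*k) / real (2*k)" for k unfolding E_def by (rule evn_LA1)
  have E0: "E $ 0 = 0" by (simp add: Ek)
  have "LA 1 ^ 3 = (E oo fps_X^2) ^ 3" using evn_comp[OF oddz_LA1] by (simp add: E_def)
  also have "\<dots> = E ^ 3 oo fps_X^2" by (rule fps_compose_power[OF X2_0])
  finally have "(LA 1 ^ 3) $ (2*n) = (E * E * E) $ n" by (simp add: compose_X2_nth power3_eq_cube)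
  also have "\<dots> = (\<Sum>(i, j, k)\<in>T3 n. E $ i * E $ j * E $ k)" by (rule triple_nth)
  also have "\<dots> = (\<Sum>(i, j, k)\<in>triples n. E $ i * E $ j * E $ k)"
    by (rule T3_cube[where G = "\<lambda>(i, j, k). E $ i * E $ j * E $ k"]) (simp_all add: E0)
  also have "\<dots> = (\<Sum>(k, l, m) \<in> triples n.
            bernoulli_bar (2*k) * bernoulli_bar (2*l) * bernoulli_bar (2*m)
            / (real (2*k) * real (2*l) * real (2*m)))"
    by (intro sum.cong refl) (auto simp: Ek triples_def bb_bar)
  finally show ?thesis .
qed

lemma vv1_val:
  assumes n: "n \<ge> 1"
  shows "vv (2*n) 1 = (\<Sum>k=1..n-1. lp k * sp (n-k)) + lp n"
proof -
  have "vv (2*n) 1 = (ell * Sinv) $ (2*n)" using vv1[OF n] by (simp add: mult.commute)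
  also have "\<dots> = (evn ell * evn Sinv) $ n" by (rule oddz_nth_even) (simp_all add: oddz_ell oddz_Sinv)
  also have "\<dots> = (\<Sum>i=0..n. lp i * sp (n-i))" by (simp add: fps_mult_nth evn_ell evn_Sinv)
  also have "\<dots> = (\<Sum>k=1..n-1. lp k * sp (n-k)) + lp n"
    using sum_split_ends[OF n, of "\<lambda>i. lp i * sp (n-i)"] by (simp add: lp0 sp0)
  finally show ?thesis .
qed

lemma vv2_val:
  assumes n: "n \<ge> 1"
  shows "vv (2*n) 2 = (\<Sum>(k, l, m)\<in>triples n. lp k * lp l * sp m)
           + (\<Sum>k=1..n-1. lp k * lp (n-k)) + bb (2*n-2) / (4 * fact (2*n-2))"
proof -
  have "(Sinv * ell^2) $ (2*n) = (ell * ell * Sinv) $ (2*n)" by (simp add: power2_eq_square ac_simps)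
  also have "\<dots> = evn (ell * ell * Sinv) $ n" by (simp add: evn_nth)
  also have "evn (ell * ell * Sinv) = evn ell * evn ell * evn Sinv"
    by (simp add: evn_mult oddz_mult oddz_ell oddz_Sinv)
  also have "(evn ell * evn ell * evn Sinv) $ n = (\<Sum>(i, j, k)\<in>T3 n. lp i * lp j * sp k)"
    by (simp add: triple_nth evn_ell evn_Sinv)
  also have "\<dots> = (\<Sum>(k, l, m)\<in>triples n. lp k * lp l * sp m) + (\<Sum>k=1..n-1. lp k * lp (n-k))"
    using T3_split[where G = "\<lambda>(i, j, k). lp i * lp j * sp k" and n = n] by (simp add: lp0 sp0)
  finally show ?thesis using vv2[OF n] by simp
qed

theorem theorem5p3:
  fixes n :: nat
  assumes "n \<ge> 3"
  shows "(\<Sum>(k, l, m) \<in> triples n.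
            bernoulli_bar (2*k) * bernoulli_bar (2*l) * bernoulli_bar (2*m)
            / (real (2*k) * real (2*l) * real (2*m)))
       = 3 / (2 * real n) * (\<Sum>(k, l, m) \<in> triples n.
            bernoulli (2*k) * bernoulli (2*l) * bernoulli_bar (2*m) / (real (2*k) * real (2*l))
            * multinom3 (2*n) (2*k) (2*l) (2*m))
       + 3 / real n * harm (2*n) * (\<Sum>k = 1..n-1.
            real ((2*n) choose (2*k)) * bernoulli (2*k) * bernoulli_bar (2*n - 2*k) / real (2*k))
       + 3 / (2 * real n ^ 2) * (\<Sum>k = 1..n-1.
            real ((2*n) choose (2*k)) * bernoulli (2*k) / real (2*k)
            * (bernoulli (2*n - 2*k) - bernoulli_bar (2*n - 2*k)))
       + 3 / (2 * real n ^ 2) * harm (2*n - 1) * (bernoulli (2*n) - bernoulli_bar (2*n))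
       + 6 * harm2 (2*n) * bernoulli_bar (2*n) / real (2*n)
       - real (2*n - 1) / 4 * bernoulli_bar (2*n - 2)"
proof -
  have n1: "n \<ge> 1" using assms by simp
  define X3 where "X3 = (\<Sum>(k, l, m)\<in>triples n. lp k * lp l * sp m)"
  define Y where "Y = (\<Sum>k=1..n-1. lp k * sp (n-k))"
  define Z where "Z = (\<Sum>k=1..n-1. lp k * lp (n-k))"
  define Wd where "Wd = (\<Sum>k=1..n-1. lp k * (real (2*(n-k)) * lp (n-k)))"
  define F where "F = (fact (2*n-1) :: real)"
  define LHS where "LHS = (\<Sum>(k, l, m) \<in> triples n.
            bernoulli_bar (2*k) * bernoulli_bar (2*l) * bernoulli_bar (2*m)
            / (real (2*k) * real (2*l) * real (2*m)))"
  have Fpos: "F > 0" by (simp add: F_def)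
  have F2: "(fact (2*n) :: real) = 2 * real n * F"
    using fact_pred[of "2*n"] n1 by (simp add: F_def)
  have F0: "(fact (2*n-2) :: real) = F / (2 * real n - 1)"
  proof -
    have e: "2*n-1 = Suc (2*n-2)" using n1 by simp
    have "F = real (Suc (2*n-2)) * fact (2*n-2)" unfolding F_def e by (rule fact_Suc)
    moreover have "real (Suc (2*n-2)) = 2 * real n - 1" using n1 by (simp add: of_nat_diff)
    moreover have "2 * real n - 1 \<noteq> 0" using n1 by simp
    ultimately show ?thesis by (simp add: eq_divide_eq)
  qed
  have e2n: "Suc (2*n-1) = 2*n" using n1 by simp
  have rs: "real (2*n) = 2 * real n" by simp
  have Hn: "harm (2*n) = harm (2*n-1) + 1 / (2 * real n)"
  proof -
    have "harm (Suc (2*n-1)) = harm (2*n-1) + inverse (real (Suc (2*n-1)) :: real)" by (rule harm_Suc)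
    then show ?thesis unfolding e2n rs inverse_eq_divide .
  qed
  have H2n: "harm2 (2*n) = harm2 (2*n-1) + harm (2*n-1) / (2 * real n)"
  proof -
    have "harm2 (Suc (2*n-1)) = harm2 (2*n-1) + harm (2*n-1) / real (Suc (2*n-1))" by (rule harm2_Suc)
    then show ?thesis unfolding e2n rs .
  qed
  have Wd_eq: "Wd = real n * Z" unfolding Wd_def Z_def by (rule Wd_sym)
  have DD3N: "coeff (cP (2*n)) 3 = (1/6) * (LA 1 ^ 3) $ (2*n) + (LA 1 * LA 2) $ (2*n) + LA 3 $ (2*n)"
    using arg_cong[OF DD3, of "\<lambda>f. f $ (2*n)"] by (simp add: DD_def)
  have c3: "coeff (cP (2*n)) 3 = F * vv (2*n) 2 / 2 + F * harm (2*n-1) * vv (2*n) 1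
                          + F * harm2 (2*n-1) * vv (2*n) 0"
    unfolding F_def using assms by (intro coeff_cP3) simp
  have vv0: "vv (2*n) 0 = bb (2*n) / fact (2*n)" by (simp add: vv_def Sinv_nth_bb)
  have vv1: "vv (2*n) 1 = Y + lp n" unfolding Y_def by (rule vv1_val[OF n1])
  have vv2: "vv (2*n) 2 = X3 + Z + bb (2*n-2) / (4 * fact (2*n-2))"
    unfolding X3_def Z_def by (rule vv2_val[OF n1])
  have cube: "(LA 1 ^ 3) $ (2*n) = LHS" unfolding LHS_def by (rule cube_part[OF n1])
  have LA3: "LA 3 $ (2*n) = (2 * real n - 1) * bb (2*n-2) / 6"
    using LA3_nth[OF n1] n1 by (simp add: of_nat_diff)
  have bbM: "(2 * real n - 1) * bb (2*n-2) / (4 * F) = bb (2*n-2) / (4 * fact (2*n-2))"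
  proof -
    have "2 * real n - 1 > 0" using n1 by simp
    then show ?thesis unfolding F0 using Fpos by (simp add: field_simps)
  qed
  have lpn: "lp n = bernoulli (2*n) / (2 * real n * fact (2*n))" by (simp add: lp_def)
  have L0: "LHS = 6 * coeff (cP (2*n)) 3 - (2 * real n - 1) * bb (2*n-2)"
    using DD3N LA12[of n] cube LA3 by simp
  have L: "LHS = 6 * (F * (X3 + Z + (2 * real n - 1) * bb (2*n-2) / (4 * F)) / 2
       + F * harm (2*n-1) * (Y + bernoulli (2*n) / (2 * real n * fact (2*n)))
       + F * harm2 (2*n-1) * (bb (2*n) / fact (2*n))) - (2 * real n - 1) * bb (2*n-2)"
    unfolding L0 c3 vv0 vv1 vv2 bbM lpn ..
  have main: "LHS = 3/(2*real n) * (fact (2*n) * X3) + 3/real n * harm (2*n) * (fact (2*n) * Y)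
     + 3/(2*real n^2) * (fact (2*n) * (Wd - Y))
     + 3/(2*real n^2) * harm (2*n-1) * (bernoulli (2*n) - bb (2*n)) + 6 * harm2 (2*n) * bb (2*n) / (2*real n)
     - (2*real n-1)/4 * bb (2*n-2)"
    by (rule final_alg[OF _ Fpos F2 Hn H2n Wd_eq L]) (use assms in simp)
  have T1: "(\<Sum>(k, l, m) \<in> triples n.
            bernoulli (2*k) * bernoulli (2*l) * bernoulli_bar (2*m) / (real (2*k) * real (2*l))
            * multinom3 (2*n) (2*k) (2*l) (2*m)) = fact (2*n) * X3"
    unfolding X3_def sum_distrib_left
    by (intro sum.cong refl) (auto simp: triples_def lp_def sp_def multinom3_def bb_bar field_simps)
  have T2: "(\<Sum>k = 1..n-1.
            real ((2*n) choose (2*k)) * bernoulli (2*k) * bernoulli_bar (2*n - 2*k) / real (2*k))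
          = fact (2*n) * Y"
    unfolding Y_def sum_distrib_left
  proof (intro sum.cong refl)
    fix k assume k: "k \<in> {1..n-1}"
    have ch: "real ((2*n) choose (2*k)) = fact (2*n) / (fact (2*k) * fact (2*n - 2*k))"
      using k by (intro binomial_fact) auto
    have e: "2*n - 2*k = 2*(n-k)" by simp
    have bbk: "bernoulli_bar (2*(n-k)) = bb (2*(n-k))" using k by (intro bb_bar[symmetric]) auto
    show "real ((2*n) choose (2*k)) * bernoulli (2*k) * bernoulli_bar (2*n - 2*k) / real (2*k)
        = fact (2*n) * (lp k * sp (n-k))"
      unfolding ch e bbk lp_def sp_def by (simp add: field_simps)
  qed
  have T3: "(\<Sum>k = 1..n-1.
            real ((2*n) choose (2*k)) * bernoulli (2*k) / real (2*k)
            * (bernoulli (2*n - 2*k) - bernoulli_bar (2*n - 2*k))) = fact (2*n) * (Wd - Y)"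
    unfolding Y_def Wd_def sum_subtractf[symmetric] sum_distrib_left
  proof (intro sum.cong refl)
    fix k assume k: "k \<in> {1..n-1}"
    have ch: "real ((2*n) choose (2*k)) = fact (2*n) / (fact (2*k) * fact (2*n - 2*k))"
      using k by (intro binomial_fact) auto
    have e: "2*n - 2*k = 2*(n-k)" by simp
    have bbk: "bernoulli_bar (2*(n-k)) = bb (2*(n-k))" using k by (intro bb_bar[symmetric]) auto
    have nk: "real (2*(n-k)) \<noteq> 0" using k by auto
    have kpos: "real (2*k) \<noteq> 0" using k by auto
    have p1: "real ((2*n) choose (2*k)) * bernoulli (2*k) / real (2*k) * bernoulli (2*(n-k))
        = fact (2*n) * (lp k * (real (2*(n-k)) * lp (n-k)))"
      unfolding ch e lp_def using nk kpos by (simp add: field_simps)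
    have p2: "real ((2*n) choose (2*k)) * bernoulli (2*k) / real (2*k) * bb (2*(n-k))
        = fact (2*n) * (lp k * sp (n-k))"
      unfolding ch e lp_def sp_def using kpos by (simp add: field_simps)
    show "real ((2*n) choose (2*k)) * bernoulli (2*k) / real (2*k)
            * (bernoulli (2*n - 2*k) - bernoulli_bar (2*n - 2*k))
        = fact (2*n) * (lp k * (real (2*(n-k)) * lp (n-k)) - lp k * sp (n-k))"
      unfolding e bbk right_diff_distrib p1 p2 ..
  qed
  have bbN: "bernoulli_bar (2*n) = bb (2*n)" using n1 by (intro bb_bar[symmetric]) simp
  have bbM2: "bernoulli_bar (2*n-2) = bb (2*n-2)" using assms by (intro bb_bar[symmetric]) simp
  have r1: "real (2*n-1) = 2 * real n - 1" using n1 by (simp add: of_nat_diff)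
  show ?thesis
    unfolding T1 T2 T3 bbN bbM2 r1 LHS_def[symmetric] main
    by (simp add: power2_eq_square)
qed

end
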